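(* Under Assumptions A1–A4, the core Two-Tailed Averaging algorithm has infinitely many switch points: for every evaluation step $n$ there exists a switch point $n_s\ge n$.
   Context: Let $\Theta=\mathbb{R}^d$, let $(\theta_t)_{t\in\mathbb{N}_0}$ be a sequence in $\Theta$, let $f\colon\Theta\to\mathbb{R}$ be a loss function, and let $E\in\mathbb{N}$ be the evaluation period. Evaluation steps are the multiples of $E$. For integers $t\ge \Delta\ge 1$ write $\mathrm{avg}(t,\Delta)=\frac{1}{\Delta}\sum_{i=t+1-\Delta}^{t}\theta_i$; set $f(\mathrm{avg}(t,0))=+\infty$. Core Two-Tailed Averaging: it maintains integers $S,L$ and vectors $\theta^S,\theta^L$, initially $S=L=0$, $\theta^S=\theta^L=0$. For $t=1,2,\dots$: first $\theta_t$ is added to both averages, i.e. $\theta^S\leftarrow\theta^S+(\theta_t-\theta^S)/(S+1)$, $S\leftarrow S+1$, and $\theta^L\leftarrow\theta^L+(\theta_t-\theta^L)/(L+1)$, $L\leftarrow L+1$ (so $\theta^S=\mathrm{avg}(t,S)$, $\theta^L=\mathrm{avg}(t,L)$). Then, if $E$ divides $t$: if $f(\theta^S)\le f(\theta^L)$, a switch is performed: $L\leftarrow S$, $\theta^L\leftarrow\theta^S$, $S\leftarrow 0$. A time step $n$ is a switch point if a switch is performed at $t=n$. Optimal length: for $t\ge1$, $\mathcal{O}(t)$ is a (fixed) minimizer of $\Delta\mapsto f(\mathrm{avg}(t,\Delta))$ over $\Delta\in\{1,\dots,t\}$; $\mathcal{O}_E(n)=\lfloor \mathcal{O}(n)/E\rfloor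 E$ and $\mathcal{O}^E(n)=\lceil \mathcal{O}(n)/E\rceil E$. Assumptions (for all evaluation steps $n\ge E$): A1: $\Delta\mapsto f(\mathrm{avg}(n,\Delta))$ is strictly decreasing on $\Delta\in\{0,E,2E,\dots,\mathcal{O}_E(n)\}$. A2: for every integer $n_+$ with $\mathcal{O}^E(n)\le n_+\le n$, $f(\mathrm{avg}(n,\mathcal{O}^E(n)))\le f(\mathrm{avg}(n,n_+))$. A3: there exists a positive multiple $n_s$ of $E$ with $\mathcal{O}(n+n_s)-\mathcal{O}(n)<n_s$. A4: $\mathcal{O}(n)\le\mathcal{O}(n+E)$. *)

theory Defs
  imports "HOL-Analysis.Analysis"
begin


definition avg :: "(nat \<Rightarrow> real ^ 'd) \<Rightarrow> nat \<Rightarrow> nat \<Rightarrow> real ^ 'd" where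
  "avg theta t Delta = (1 / real Delta) *\<^sub>R (\<Sum>i\<in>{t + 1 - Delta..t}. theta i)"

definition favg :: "(real ^ 'd \<Rightarrow> real) \<Rightarrow> (nat \<Rightarrow> real ^ 'd) \<Rightarrow> nat \<Rightarrow> nat \<Rightarrow> ereal" where
  "favg f theta t Delta = (if Delta = 0 then \<infinity> else ereal (f (avg theta t Delta)))"

text \<open>State of core Two-Tailed Averaging: (S, L, theta^S, theta^L).\<close>
type_synonym 'd tta_state = "nat \<times> nat \<times> (real ^ 'd) \<times> (real ^ 'd)"

definition tta_add :: "real ^ 'd \<Rightarrow> 'd tta_state \<Rightarrow> 'd tta_state" where
  "tta_add x st = (case st of (S, L, xS, xL) \<Rightarrow>
      (S + 1, L + 1,
       xS + (1 / real (S + 1)) *\<^sub>R (x - xS),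
       xL + (1 / real (L + 1)) *\<^sub>R (x - xL)))"

definition tta_switch_cond :: "(real ^ 'd \<Rightarrow> real) \<Rightarrow> nat \<Rightarrow> nat \<Rightarrow> 'd tta_state \<Rightarrow> bool" where
  "tta_switch_cond f E t st = (E dvd t \<and> (case st of (S, L, xS, xL) \<Rightarrow> f xS \<le> f xL))"

definition tta_step :: "(real ^ 'd \<Rightarrow> real) \<Rightarrow> nat \<Rightarrow> (nat \<Rightarrow> real ^ 'd) \<Rightarrow> nat \<Rightarrow> 'd tta_state \<Rightarrow> 'd tta_state" where
  "tta_step f E theta t st =
     (let st' = tta_add (theta t) st in
      if tta_switch_cond f E t st'
      then (case st' of (S, L, xS, xL) \<Rightarrow> (0, S, xS, xS))
      else st')"

fun tta_state :: "(real ^ 'd \<Rightarrow> real) \<Rightarrow> nat \<Rightarrow> (nat \<Rightarrow> real ^ 'd) \<Rightarrow> nat \<Rightarrow> 'd tta_state" where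
  "tta_state f E theta 0 = (0, 0, 0, 0)"
| "tta_state f E theta (Suc t) = tta_step f E theta (Suc t) (tta_state f E theta t)"

definition switch_point :: "(real ^ 'd \<Rightarrow> real) \<Rightarrow> nat \<Rightarrow> (nat \<Rightarrow> real ^ 'd) \<Rightarrow> nat \<Rightarrow> bool" where
  "switch_point f E theta n \<longleftrightarrow> n \<ge> 1 \<and>
     tta_switch_cond f E n (tta_add (theta n) (tta_state f E theta (n - 1)))"

definition is_opt_length :: "(real ^ 'd \<Rightarrow> real) \<Rightarrow> (nat \<Rightarrow> real ^ 'd) \<Rightarrow> (nat \<Rightarrow> nat) \<Rightarrow> bool" where
  "is_opt_length f theta Opt \<longleftrightarrow> (\<forall>t\<ge>1. Opt t \<in> {1..t} \<and>
      (\<forall>Delta\<in>{1..t}. f (avg theta t (Opt t)) \<le> f (avg theta t Delta)))"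

definition opt_floor :: "(nat \<Rightarrow> nat) \<Rightarrow> nat \<Rightarrow> nat \<Rightarrow> nat" where
  "opt_floor Opt E n = (Opt n div E) * E"

definition opt_ceil :: "(nat \<Rightarrow> nat) \<Rightarrow> nat \<Rightarrow> nat \<Rightarrow> nat" where
  "opt_ceil Opt E n = ((Opt n + E - 1) div E) * E"

end

theory Submission
  imports Defs
begin

lemma avg_step:
  fixes theta :: "nat \<Rightarrow> real^'d"
  assumes "S \<le> t" "S > 0 \<Longrightarrow> x = avg theta t S"
  shows "x + (1/real(S+1)) *\<^sub>R (theta (Suc t) - x) = avg theta (Suc t) (S+1)"
proof (cases "S = 0")
  case True
  then show ?thesis by (simp add: avg_def)
next
  case False
  have e: "Suc t + 1 - (S+1) = Suc (t + 1 - S - 1)" using assms(1) False by simp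
  have e2: "t + 1 - S = Suc (t + 1 - S - 1)" using assms(1) False by simp
  have sx: "(\<Sum>i\<in>{t + 1 - S..t}. theta i) = real S *\<^sub>R x"
  proof -
    have "x = (1/real S) *\<^sub>R (\<Sum>i\<in>{t + 1 - S..t}. theta i)" using assms(2) False by (simp add: avg_def)
    then have "real S *\<^sub>R x = real S *\<^sub>R ((1/real S) *\<^sub>R (\<Sum>i\<in>{t + 1 - S..t}. theta i))" by simp
    also have "\<dots> = (\<Sum>i\<in>{t + 1 - S..t}. theta i)" using False by (simp only: scaleR_scaleR) simp
    finally show ?thesis by (rule sym)
  qed
  have "avg theta (Suc t) (S+1) = (1/real(S+1)) *\<^sub>R ((\<Sum>i\<in>{t + 1 - S..t}. theta i) + theta (Suc t))"
    unfolding avg_def e using e2 sum.cl_ivl_Suc[of theta "Suc (t + 1 - S - 1)" t] by (simp add: e2[symmetric])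
  also have "\<dots> = (1/real(S+1)) *\<^sub>R (real S *\<^sub>R x + theta (Suc t))" unfolding sx ..
  also have "\<dots> = x + (1/real(S+1)) *\<^sub>R (theta (Suc t) - x)"
  proof -
    define c where "c = 1/real(S+1)"
    have r: "1 - c = c * real S" unfolding c_def by (simp add: field_simps)
    have "x - c *\<^sub>R x = c *\<^sub>R (real S *\<^sub>R x)"
    proof -
      have "x - c *\<^sub>R x = (1 - c) *\<^sub>R x" by (simp add: scaleR_diff_left)
      then show ?thesis using r by simp
    qed
    moreover have "x + c *\<^sub>R (theta (Suc t) - x) = (x - c *\<^sub>R x) + c *\<^sub>R theta (Suc t)"
      by (simp add: scaleR_diff_right algebra_simps)
    ultimately show ?thesis unfolding c_def[symmetric] by (simp add: scaleR_add_right)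
  qed
  finally show ?thesis by simp
qed

definition inv :: "(nat \<Rightarrow> real^'d) \<Rightarrow> nat \<Rightarrow> 'd tta_state \<Rightarrow> bool" where
  "inv theta t st \<longleftrightarrow> (case st of (S,L,xS,xL) \<Rightarrow> S \<le> L \<and> L \<le> t \<and>
      (0<S \<longrightarrow> xS = avg theta t S) \<and> (0<L \<longrightarrow> xL = avg theta t L))"

lemma add_inv:
  assumes "inv theta t st"
  shows "inv theta (Suc t) (tta_add (theta (Suc t)) st) \<and> fst (tta_add (theta (Suc t)) st) = fst st + 1"
proof -
  obtain S L xS xL where st: "st = (S,L,xS,xL)" by (cases st) auto
  have h: "S \<le> L" "L \<le> t" "0<S \<Longrightarrow> xS = avg theta t S" "0<L \<Longrightarrow> xL = avg theta t L"
    using assms unfolding inv_def st by auto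
  have a1: "xS + (1/real(S+1)) *\<^sub>R (theta (Suc t) - xS) = avg theta (Suc t) (S+1)"
    using h avg_step[of S t xS theta] by auto
  have a2: "xL + (1/real(L+1)) *\<^sub>R (theta (Suc t) - xL) = avg theta (Suc t) (L+1)"
    using h avg_step[of L t xL theta] by auto
  show ?thesis unfolding st tta_add_def inv_def using h a1 a2 by simp
qed

lemma step_inv:
  assumes "inv theta t st"
  shows "inv theta (Suc t) (tta_step f E theta (Suc t) st)"
proof -
  obtain S L xS xL where st': "tta_add (theta (Suc t)) st = (S,L,xS,xL)" by (cases "tta_add (theta (Suc t)) st") auto
  have i: "inv theta (Suc t) (S,L,xS,xL)" and S: "S = fst st + 1" using add_inv[OF assms] st' by auto
  show ?thesis unfolding tta_step_def Let_def st' using i S by (auto simp: inv_def)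
qed

lemma st_inv: "inv theta t (tta_state f E theta t)"
proof (induction t)
  case 0 then show ?case by (simp add: inv_def)
next
  case (Suc t) then show ?case using step_inv by simp
qed

lemma fst_pa: "fst (tta_add x st) = fst st + 1"
  by (cases st) (auto simp: tta_add_def)

lemma st_noswitch:
  "\<not> tta_switch_cond f E (Suc t) (tta_add (theta (Suc t)) (tta_state f E theta t)) \<Longrightarrow>
    tta_state f E theta (Suc t) = tta_add (theta (Suc t)) (tta_state f E theta t)"
  by (simp add: tta_step_def Let_def)

lemma st_switch:
  "tta_switch_cond f E (Suc t) (tta_add (theta (Suc t)) (tta_state f E theta t)) \<Longrightarrow>
    fst (tta_state f E theta (Suc t)) = 0"
  by (simp add: tta_step_def Let_def split: prod.splits)

lemma phaseX:
  assumes "E dvd s" "fst (tta_state f E theta s) = 0"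
  shows "j < E \<Longrightarrow> fst (tta_state f E theta (s + j)) = j"
proof (induction j)
  case 0 then show ?case using assms by simp
next
  case (Suc j)
  have nd: "\<not> E dvd Suc (s + j)"
  proof
    assume "E dvd Suc (s+j)"
    then have "E dvd Suc j" using assms(1) by (metis add_Suc_right dvd_add_right_iff)
    then show False using Suc.prems by (simp add: nat_dvd_not_less)
  qed
  then have "tta_state f E theta (Suc (s + j)) = tta_add (theta (Suc (s+j))) (tta_state f E theta (s+j))"
    by (intro st_noswitch) (simp add: tta_switch_cond_def)
  then show ?case using Suc by (simp add: fst_pa)
qed

lemma pa_inv: "inv theta (Suc t) (tta_add (theta (Suc t)) (tta_state f E theta t))"
  using add_inv[OF st_inv] by blast

lemma oc_dvd: "E dvd opt_ceil Opt E n" by (simp add: opt_ceil_def)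
lemma oc_le: "opt_ceil Opt E n \<le> Opt n + E - 1"
  unfolding opt_ceil_def by (metis div_mult_mod_eq le_add1)
lemma oc_ge: "E \<ge> 1 \<Longrightarrow> Opt n \<ge> 1 \<Longrightarrow> E \<le> opt_ceil Opt E n"
proof -
  assume a: "E \<ge> 1" "Opt n \<ge> 1"
  have "1 \<le> (Opt n + E - 1) div E" 
    using a div_le_mono[of E "Opt n + E - 1" E] by simp
  then show ?thesis unfolding opt_ceil_def by simp
qed
lemma oc_mono: "Opt a \<le> Opt b \<Longrightarrow> opt_ceil Opt E a \<le> opt_ceil Opt E b"
  unfolding opt_ceil_def by (intro mult_le_mono1 div_le_mono) simp

theorem mainTheorem3:
  fixes theta :: "nat \<Rightarrow> real ^ 'd" and f :: "real ^ 'd \<Rightarrow> real"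
    and E :: nat and Opt :: "nat \<Rightarrow> nat"
  assumes E_pos: "E \<ge> 1"
    and Opt: "is_opt_length f theta Opt"
    and A1: "\<And>n k1 k2. E dvd n \<Longrightarrow> n \<ge> E \<Longrightarrow> k1 < k2 \<Longrightarrow> k2 * E \<le> opt_floor Opt E n \<Longrightarrow>
               favg f theta n (k2 * E) < favg f theta n (k1 * E)"
    and A2: "\<And>n np. E dvd n \<Longrightarrow> n \<ge> E \<Longrightarrow> opt_ceil Opt E n \<le> np \<Longrightarrow> np \<le> n \<Longrightarrow>
               favg f theta n (opt_ceil Opt E n) \<le> favg f theta n np"
    and A3: "\<And>n. E dvd n \<Longrightarrow> n \<ge> E \<Longrightarrow>
               \<exists>ns>0. E dvd ns \<and> int (Opt (n + ns)) - int (Opt n) < int ns"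
    and A4: "\<And>n. E dvd n \<Longrightarrow> n \<ge> E \<Longrightarrow> Opt n \<le> Opt (n + E)"
  shows "\<forall>n. E dvd n \<longrightarrow> (\<exists>ns\<ge>n. switch_point f E theta ns)"
proof -
  let ?st = "tta_state f E theta"
  let ?pa = "\<lambda>t. tta_add (theta t) (?st (t - 1))"
  let ?oc = "opt_ceil Opt E"
  have Opt1: "\<And>t. t \<ge> 1 \<Longrightarrow> Opt t \<ge> 1" using Opt unfolding is_opt_length_def by auto
  have claim: False if m1: "m \<ge> E" and m2: "E dvd m" and m3: "fst (?pa m) = E"
      and nos: "\<forall>t\<ge>m. \<not> switch_point f E theta t" for m
  proof -
    have S: "fst (?pa t) = t + E - m" if "t \<ge> m" for t
      using that
    proof (induction t rule: dec_induct)
      case base then show ?case using m3 by simp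
    next
      case (step t)
      have t1: "t \<ge> 1" using step m1 E_pos by simp
      then obtain u where u: "t = Suc u" by (cases t) auto
      have "\<not> switch_point f E theta t" using nos step by simp
      then have "?st t = ?pa t" using t1 u st_noswitch[of f E u theta] by (simp add: switch_point_def)
      then show ?case using step fst_pa[of "theta (Suc t)" "?st t"] by simp
    qed
    have ne: "t + E - m \<noteq> ?oc t" if t: "t \<ge> m" "E dvd t" for t
    proof
      assume eq: "t + E - m = ?oc t"
      have t1: "t \<ge> 1" using t m1 E_pos by simp
      then obtain u where u: "t = Suc u" by (cases t) auto
      obtain S L xS xL where p: "?pa t = (S,L,xS,xL)" by (cases "?pa t") auto
      have i: "inv theta t (S,L,xS,xL)" using pa_inv[of theta u f E] p u by simp
      have SS: "S = t + E - m" using S[OF t(1)] p by simp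
      have ii: "S \<le> L" "L \<le> t" "xS = avg theta t S" "xL = avg theta t L" "S \<ge> 1"
        using i SS t m1 E_pos unfolding inv_def by auto
      have "favg f theta t (?oc t) \<le> favg f theta t L"
        using A2[of t L] t m1 ii eq SS by simp
      then have "f xS \<le> f xL" using ii eq SS by (simp add: favg_def)
      then have "switch_point f E theta t" using t1 t p by (simp add: switch_point_def tta_switch_cond_def)
      then show False using nos t by simp
    qed
    have lt: "E + j * E < ?oc (m + j * E)" for j
    proof (induction j)
      case 0
      have "E \<le> ?oc m" using oc_ge[of E Opt m] Opt1[of m] m1 E_pos by simp
      moreover have "m + E - m \<noteq> ?oc m" using ne[of m] m2 by simp
      ultimately show ?case by simp
    next
      case (Suc j)
      let ?t = "m + j * E"
      have d1: "E dvd ?t" using m2 by simp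
      have "E dvd ?oc ?t" by (rule oc_dvd)
      then obtain q where q: "?oc ?t = q * E" by (metis dvd_def mult.commute)
      have "E + j*E < q * E" using Suc q by simp
      then have "Suc j < q" using E_pos by (metis add_mult_distrib mult_1 mult_less_cancel2 plus_1_eq_Suc)
      then have "Suc j * E + E \<le> q * E" by (metis Suc_leI add.commute mult_Suc mult_le_mono1)
      also have "\<dots> \<le> ?oc (?t + E)" using q oc_mono[of Opt ?t "?t + E" E] A4[of ?t] d1 m1 by simp
      finally have "E + Suc j * E \<le> ?oc (m + Suc j * E)" by (simp add: ac_simps)
      moreover have "m + Suc j * E + E - m \<noteq> ?oc (m + Suc j * E)" using ne[of "m + Suc j * E"] m2 by simp
      ultimately show ?case by (simp add: algebra_simps)
    qed
    define c where "c j = int (Opt (m + j * E)) - int (j * E)" for j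
    have cpos: "c j \<ge> 1" for j
    proof -
      have "E + j * E < Opt (m + j*E) + E" using lt[of j] oc_le[of Opt E "m + j*E"] E_pos by simp
      then have "j * E < Opt (m + j*E)" by simp
      then have "int (j * E) < int (Opt (m + j*E))" by linarith
      then show ?thesis unfolding c_def by linarith
    qed
    have desc: "\<exists>j. c j \<le> c 0 - int N" for N
    proof (induction N)
      case 0 then show ?case by auto
    next
      case (Suc N)
      then obtain j where j: "c j \<le> c 0 - int N" by blast
      have d1: "E dvd m + j * E" using m2 by simp
      obtain ns where ns: "ns > 0" "E dvd ns" "int (Opt (m + j*E + ns)) - int (Opt (m + j*E)) < int ns"
        using A3[OF d1] m1 by auto
      obtain k where k: "ns = k * E" using ns(2) by (metis dvd_def mult.commute)
      have "c (j + k) < c j" using ns(3) k unfolding c_def by (simp add: algebra_simps)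
      then show ?case using j by (intro exI[of _ "j+k"]) simp
    qed
    obtain j where "c j \<le> c 0 - int (nat (c 0))" using desc by blast
    then show False using cpos[of 0] cpos[of j] by simp
  qed
  have next_sp: "\<exists>ns>s. switch_point f E theta ns" if s1: "E dvd s" and s2: "fst (?st s) = 0" for s
  proof (rule ccontr)
    assume na: "\<not> ?thesis"
    have "fst (?st (s + (E - 1))) = E - 1" using phaseX[OF s1 s2, of "E - 1"] E_pos by simp
    moreover have "s + E = Suc (s + (E - 1))" using E_pos by simp
    ultimately have "fst (?pa (s + E)) = E" using fst_pa E_pos by (metis diff_Suc_1 Suc_diff_1 add_gr_0 less_one not_less order_le_less_trans zero_less_one Suc_eq_plus1 fst_pa)
    moreover have "\<forall>t\<ge>s+E. \<not> switch_point f E theta t" using na E_pos by auto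
    moreover have "E dvd s + E" using s1 by simp
    ultimately show False using claim[of "s + E"] by simp
  qed
  have sp_prop: "E dvd s \<and> fst (?st s) = 0" if "switch_point f E theta s" for s
  proof -
    have "s \<ge> 1" using that by (simp add: switch_point_def)
    then obtain u where u: "s = Suc u" by (cases s) auto
    show ?thesis using that st_switch[of f E u theta] u by (auto simp: switch_point_def tta_switch_cond_def)
  qed
  have "\<exists>ns\<ge>n. switch_point f E theta ns" for n
  proof (induction n)
    case 0 then show ?case using next_sp[of 0] by auto
  next
    case (Suc n)
    then obtain ns where ns: "ns \<ge> n" "switch_point f E theta ns" by blast
    show ?case
    proof (cases "ns \<ge> Suc n")
      case True then show ?thesis using ns by blast
    next
      case False
      then obtain ns' where "ns' > ns" "switch_point f E theta ns'" using next_sp sp_prop ns(2) by blast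
      then show ?thesis using False ns by (intro exI[of _ ns']) simp
    qed
  qed
  then show ?thesis by blast
qed

end
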